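(* Let $a<b$ be real numbers and $I=[a,b]$. There is a constant $\varepsilon_0>0$ such that for every $0<\varepsilon<\varepsilon_0$ there exist piecewise continuous functions $q_1,q_2$ on $I$ and an interval $I_\varepsilon\subset(a,b)$ of length $\varepsilon$ such that $q_1(t)\le q_2(t)$ for all $t\in I\setminus I_\varepsilon$ and $q_1(t)>q_2(t)$ for all $t\in I_\varepsilon$, and for which Sturm's comparison theorem fails on $I$; that is, the equation $u''+q_1(t)u=0$ has a solution $u$ with $u(a)=u(b)=0$ and $u(t)\neq0$ for $t\in(a,b)$, while the equation $v''+q_2(t)v=0$ has a solution $v$ with $v(t)\neq 0$ for all $t\in[a,b]$.
   Context: All coefficient functions are piecewise continuous on $I$, and "solution" always means a nontrivial (not identically zero) solution. *)

theory Defs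
  imports "HOL-Analysis.Analysis"
begin

definition piecewise_continuous_on :: "real \<Rightarrow> real \<Rightarrow> (real \<Rightarrow> real) \<Rightarrow> bool" where
  "piecewise_continuous_on a b q \<longleftrightarrow>
     (\<exists>S. finite S \<and> continuous_on ({a..b} - S) q) \<and>
     (\<forall>x\<in>{a..b}. (a < x \<longrightarrow> (\<exists>l. (q \<longlongrightarrow> l) (at_left x))) \<and>
                   (x < b \<longrightarrow> (\<exists>l. (q \<longlongrightarrow> l) (at_right x))))"

definition is_solution_on :: "real \<Rightarrow> real \<Rightarrow> (real \<Rightarrow> real) \<Rightarrow> (real \<Rightarrow> real) \<Rightarrow> bool" where
  "is_solution_on a b q u \<longleftrightarrow>
     (\<exists>u'. (\<forall>t\<in>{a..b}. (u has_real_derivative u' t) (at t within {a..b})) \<and>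
           continuous_on {a..b} u' \<and>
           (\<exists>S. finite S \<and> (\<forall>t\<in>{a..b} - S.
                 (u' has_real_derivative (- q t * u t)) (at t within {a..b})))) \<and>
     (\<exists>t\<in>{a..b}. u t \<noteq> 0)"

end

theory Submission
  imports Defs
begin

lemma deriv_glue:
  fixes f g f' g' :: "real \<Rightarrow> real"
  assumes f: "\<And>x. (f has_real_derivative f' x) (at x)"
    and g: "\<And>x. (g has_real_derivative g' x) (at x)"
    and e: "f c = g c" "f' c = g' c"
  shows "((\<lambda>x. if x \<in> {..c} then f x else g x) has_real_derivative
      (if x \<in> {..c} then f' x else g' x)) (at x)"
proof -
  have cl: "closure {..c} \<inter> closure {c<..} = {c::real}" by auto
  have "((\<lambda>x. if x \<in> {..c} then f x else g x) has_derivative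
      (if x \<in> {..c} then ((*) (f' x)) else ((*) (g' x)))) (at x within ({..c} \<union> {c<..}))"
    apply (rule has_derivative_If_within_closures)
    using f g e unfolding has_field_derivative_def
    by (auto simp: cl intro: has_derivative_at_withinI)
  moreover have "{..c} \<union> {c<..} = (UNIV::real set)" by auto
  ultimately show ?thesis unfolding has_field_derivative_def
    by (auto split: if_splits)
qed

lemma pc_bump:
  fixes h :: "real \<Rightarrow> real"
  assumes cd: "c < d" and hc: "\<And>t. t \<in> {c..d} \<Longrightarrow> isCont h t"
  shows "piecewise_continuous_on a b (\<lambda>t. if c \<le> t \<and> t \<le> d then h t else 0)"
    (is "piecewise_continuous_on a b ?q")
proof -
  have ic: "isCont ?q x" if "x \<notin> {c,d}" for x
  proof -
    have "x \<noteq> c" "x \<noteq> d" using that by auto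
    then consider "x < c" | "c < x \<and> x < d" | "d < x" by linarith
    then show ?thesis
    proof cases
      case 1
      have "eventually (\<lambda>y. y \<in> {..<c}) (nhds x)" using 1 by (intro eventually_nhds_in_open) auto
      then have e: "eventually (\<lambda>y. ?q y = 0) (nhds x)" by eventually_elim auto
      show ?thesis using isCont_cong[OF e] by simp
    next
      case 2
      have "eventually (\<lambda>y. y \<in> {c<..<d}) (nhds x)" using 2 by (intro eventually_nhds_in_open) auto
      then have e: "eventually (\<lambda>y. ?q y = h y) (nhds x)" by eventually_elim auto
      show ?thesis using isCont_cong[OF e] hc[of x] 2 by simp
    next
      case 3
      have "eventually (\<lambda>y. y \<in> {d<..}) (nhds x)" using 3 by (intro eventually_nhds_in_open) auto
      then have e: "eventually (\<lambda>y. ?q y = 0) (nhds x)" by eventually_elim auto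
      show ?thesis using isCont_cong[OF e] by simp
    qed
  qed
  have L: "\<exists>l. (?q \<longlongrightarrow> l) (at_left x)" for x
  proof -
    consider "x \<le> c" | "c < x \<and> x \<le> d" | "d < x" by fastforce
    then show ?thesis
    proof cases
      case 1
      have "eventually (\<lambda>y. y \<in> {x-1<..<x}) (at_left x)" by (rule eventually_at_left_real) auto
      then have "eventually (\<lambda>y. ?q y = 0) (at_left x)" by eventually_elim (use 1 in auto)
      then show ?thesis by (intro exI tendsto_eventually)
    next
      case 2
      have "eventually (\<lambda>y. y \<in> {c<..<x}) (at_left x)" by (rule eventually_at_left_real) (use 2 in auto)
      then have e: "eventually (\<lambda>y. h y = ?q y) (at_left x)" by eventually_elim (use 2 in auto)
      have "(h \<longlongrightarrow> h x) (at_left x)" using hc[of x] 2 by (simp add: filterlim_at_split isCont_def)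
      then show ?thesis by (intro exI Lim_transform_eventually[OF _ e])
    next
      case 3
      have "eventually (\<lambda>y. y \<in> {d<..<x}) (at_left x)" by (rule eventually_at_left_real) (use 3 in auto)
      then have "eventually (\<lambda>y. ?q y = 0) (at_left x)" by eventually_elim auto
      then show ?thesis by (intro exI tendsto_eventually)
    qed
  qed
  have R: "\<exists>l. (?q \<longlongrightarrow> l) (at_right x)" for x
  proof -
    consider "x < c" | "c \<le> x \<and> x < d" | "d \<le> x" by fastforce
    then show ?thesis
    proof cases
      case 1
      have "eventually (\<lambda>y. y \<in> {x<..<c}) (at_right x)" by (rule eventually_at_right_real) (use 1 in auto)
      then have "eventually (\<lambda>y. ?q y = 0) (at_right x)" by eventually_elim auto
      then show ?thesis by (intro exI tendsto_eventually)
    next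
      case 2
      have "eventually (\<lambda>y. y \<in> {x<..<d}) (at_right x)" by (rule eventually_at_right_real) (use 2 in auto)
      then have e: "eventually (\<lambda>y. h y = ?q y) (at_right x)" by eventually_elim (use 2 in auto)
      have "(h \<longlongrightarrow> h x) (at_right x)" using hc[of x] 2 by (simp add: filterlim_at_split isCont_def)
      then show ?thesis by (intro exI Lim_transform_eventually[OF _ e])
    next
      case 3
      have "eventually (\<lambda>y. y \<in> {x<..<x+1}) (at_right x)" by (rule eventually_at_right_real) auto
      then have "eventually (\<lambda>y. ?q y = 0) (at_right x)" by eventually_elim (use 3 in auto)
      then show ?thesis by (intro exI tendsto_eventually)
    qed
  qed
  have "continuous_on ({a..b} - {c,d}) ?q" using ic by (intro continuous_at_imp_continuous_on) auto
  then show ?thesis unfolding piecewise_continuous_on_def using L R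
    by (intro conjI exI[of _ "{c,d}"]) auto
qed


theorem theorem1:
  fixes a b :: real
  assumes "a < b"
  shows "\<exists>\<epsilon>0>0. \<forall>\<epsilon>. 0 < \<epsilon> \<and> \<epsilon> < \<epsilon>0 \<longrightarrow>
           (\<exists>q1 q2 c d. piecewise_continuous_on a b q1 \<and> piecewise_continuous_on a b q2 \<and>
              a < c \<and> d < b \<and> d - c = \<epsilon> \<and>
              (\<forall>t\<in>{a..b} - {c..d}. q1 t \<le> q2 t) \<and>
              (\<forall>t\<in>{c..d}. q1 t > q2 t) \<and>
              (\<exists>u. is_solution_on a b q1 u \<and> u a = 0 \<and> u b = 0 \<and>
                   (\<forall>t\<in>{a<..<b}. u t \<noteq> 0)) \<and>
              (\<exists>v. is_solution_on a b q2 v \<and> (\<forall>t\<in>{a..b}. v t \<noteq> 0)))"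
proof (intro exI[of _ "b - a"] conjI allI impI)
  show "0 < b - a" using assms by simp
  fix e :: real
  assume "0 < e \<and> e < b - a"
  then have e0: "0 < e" and eb: "e < b - a" by auto
  define m where "m = (a + b) / 2"
  define c where "c = m - e / 2"
  define d where "d = m + e / 2"
  define \<alpha> where "\<alpha> = (b - a) / 2 - e / 4"
  define w where "w t = \<alpha> - (t - m)^2 / e" for t
  define w' where "w' t = - 2 * (t - m) / e" for t
  define h where "h t = 2 / (e * w t)" for t
  define q1 where "q1 t = (if c \<le> t \<and> t \<le> d then h t else 0)" for t
  define q2 :: "real \<Rightarrow> real" where "q2 t = 0" for t
  define u where "u t = (if t \<in> {..c} then t - a else (if t \<in> {..d} then w t else b - t))" for t
  define U' where "U' t = (if t \<in> {..c} then 1 else (if t \<in> {..d} then w' t else - 1))" for t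
  have ac: "a < c" and db: "d < b" and cd: "c < d" using e0 eb by (auto simp: c_def d_def m_def field_simps)
  have wpos: "w t > 0" if "t \<in> {c..d}" for t
  proof -
    have "\<bar>t - m\<bar> \<le> e / 2" using that unfolding c_def d_def atLeastAtMost_iff by (cases "t \<ge> m") auto
    then have "\<bar>t - m\<bar>^2 \<le> (e/2)^2" by (intro power_mono) auto
    then have "(t - m)^2 \<le> e * (e / 4)" by (simp add: power2_eq_square)
    then have h4: "(t - m)^2 / e \<le> e / 4" using e0 by (simp add: divide_le_eq mult.commute)
    have "e / 4 < (b - a) / 2 - e / 4" using eb by simp
    then show ?thesis using h4 unfolding w_def \<alpha>_def by linarith
  qed
  have hc: "isCont h t" if "t \<in> {c..d}" for t
    using wpos[OF that] e0 unfolding h_def[abs_def] w_def[abs_def] by (intro continuous_intros) auto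
  have G1: "piecewise_continuous_on a b q1" unfolding q1_def[abs_def] by (rule pc_bump[OF cd hc])
  have G2: "piecewise_continuous_on a b q2" unfolding q2_def[abs_def] using pc_bump[OF cd, of "\<lambda>_. 0"] by simp
  have G3: "a < c" "d < b" by (fact ac, fact db)
  have G4: "d - c = e" by (simp add: c_def d_def)
  have G5: "\<forall>t\<in>{a..b} - {c..d}. q1 t \<le> q2 t" by (auto simp: q1_def q2_def)
  have G6: "\<forall>t\<in>{c..d}. q1 t > q2 t" using wpos e0 by (auto simp: q1_def q2_def h_def)
  have G7: "\<exists>v. is_solution_on a b q2 v \<and> (\<forall>t\<in>{a..b}. v t \<noteq> 0)"
  proof (intro exI[of _ "\<lambda>_. 1"] conjI)
    have "\<forall>t\<in>{a..b}. ((\<lambda>_. 1::real) has_real_derivative 0) (at t within {a..b})" by simp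
    moreover have "\<exists>t\<in>{a..b}. (1::real) \<noteq> 0" using assms by auto
    ultimately show "is_solution_on a b q2 (\<lambda>_. 1)" unfolding is_solution_on_def q2_def
      by (intro conjI exI[of _ "\<lambda>_. 0"] exI[of _ "{}"]) auto
  qed auto
  have wd: "(w has_real_derivative w' t) (at t)" for t
    unfolding w_def[abs_def] w'_def using e0 by (auto intro!: derivative_eq_intros simp: field_simps)
  have ud: "(u has_real_derivative U' t) (at t)" for t
  proof -
    have inner: "((\<lambda>x. if x \<in> {..d} then w x else b - x) has_real_derivative
      (if t \<in> {..d} then w' t else - 1)) (at t)" for t
      apply (rule deriv_glue)
      using wd apply simp
        apply (auto intro!: derivative_eq_intros)[1]
      using e0 by (simp_all add: w_def w'_def d_def \<alpha>_def m_def power2_eq_square field_simps)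
    show ?thesis unfolding u_def[abs_def] U'_def
      apply (rule deriv_glue)
         apply (auto intro!: derivative_eq_intros)[1]
      apply (rule inner)
      using ac cd e0 by (simp_all add: w_def w'_def c_def \<alpha>_def m_def power2_eq_square field_simps)
  qed
  have U'eq: "U' = (\<lambda>t. max (-1) (min 1 (- 2 * (t - m) / e)))"
  proof
    fix t
    show "U' t = max (-1) (min 1 (- 2 * (t - m) / e))"
    proof (cases "t \<le> c")
      case True
      then have "1 \<le> - 2 * (t - m) / e" using e0 by (simp add: c_def le_divide_eq)
      then show ?thesis using True by (simp add: U'_def)
    next
      case False
      show ?thesis
      proof (cases "t \<le> d")
        case True
        then have "- 2 * (t - m) / e \<le> 1" "-1 \<le> - 2 * (t - m) / e" using e0 False
          by (simp_all add: c_def d_def divide_le_eq le_divide_eq)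
        then show ?thesis using True False by (simp add: U'_def w'_def)
      next
        case F2: False
        then have "- 2 * (t - m) / e \<le> -1" using e0 by (simp add: d_def divide_le_eq)
        then show ?thesis using False F2 by (simp add: U'_def)
      qed
    qed
  qed
  have U'd: "(U' has_real_derivative (- q1 t * u t)) (at t)" if "t \<notin> {c, d}" for t
  proof -
    have "t \<noteq> c" "t \<noteq> d" using that by auto
    then consider "t < c" | "c < t \<and> t < d" | "d < t" by linarith
    then show ?thesis
    proof cases
      case 1
      have "((\<lambda>_. 1) has_real_derivative 0) (at t)" by simp
      then have "(U' has_real_derivative 0) (at t)"
        by (rule has_field_derivative_transform_within_open[where S="{..<c}"]) (use 1 in \<open>auto simp: U'_def\<close>)
      then show ?thesis using 1 by (simp add: q1_def)
    next
      case 2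
      have "(w' has_real_derivative (- 2 / e)) (at t)" unfolding w'_def[abs_def]
        by (use e0 in \<open>auto intro!: derivative_eq_intros simp: field_simps\<close>)
      then have "(U' has_real_derivative (- 2 / e)) (at t)"
        by (rule has_field_derivative_transform_within_open[where S="{c<..<d}"]) (use 2 in \<open>auto simp: U'_def\<close>)
      moreover have "- q1 t * u t = - 2 / e" using 2 wpos[of t] e0 ac
        by (auto simp: q1_def u_def h_def)
      ultimately show ?thesis by simp
    next
      case 3
      have "((\<lambda>_. -1) has_real_derivative 0) (at t)" by simp
      then have "(U' has_real_derivative 0) (at t)"
        by (rule has_field_derivative_transform_within_open[where S="{d<..}"]) (use 3 cd in \<open>auto simp: U'_def\<close>)
      then show ?thesis using 3 by (simp add: q1_def)
    qed
  qed
  have upos: "u t \<noteq> 0" if "t \<in> {a<..<b}" for t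
  proof -
    consider "t \<le> c" | "c < t \<and> t \<le> d" | "d < t" by linarith
    then show ?thesis
    proof cases
      case 1 then show ?thesis using that by (simp add: u_def)
    next
      case 2 then show ?thesis using wpos[of t] by (simp add: u_def)
    next
      case 3 then show ?thesis using that cd by (simp add: u_def)
    qed
  qed
  have "m \<in> {a<..<b}" using assms by (simp add: m_def)
  have G8: "\<exists>u. is_solution_on a b q1 u \<and> u a = 0 \<and> u b = 0 \<and> (\<forall>t\<in>{a<..<b}. u t \<noteq> 0)"
  proof (intro exI[of _ u] conjI)
    show "u a = 0" using ac by (simp add: u_def)
    show "u b = 0" using db cd ac by (simp add: u_def)
    show "\<forall>t\<in>{a<..<b}. u t \<noteq> 0" using upos by blast
    show "is_solution_on a b q1 u" unfolding is_solution_on_def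
    proof (intro conjI exI[of _ U'] exI[of _ "{c,d}"] ballI)
      show "(u has_real_derivative U' t) (at t within {a..b})" for t
        using ud by (rule has_field_derivative_at_within)
      show "continuous_on {a..b} U'" unfolding U'eq using e0 by (intro continuous_intros) auto
      show "finite {c, d}" by simp
      show "(U' has_real_derivative - q1 t * u t) (at t within {a..b})" if "t \<in> {a..b} - {c, d}" for t
      proof -
        have "t \<notin> {c, d}" using that by blast
        then show ?thesis by (rule has_field_derivative_at_within[OF U'd])
      qed
      show "\<exists>t\<in>{a..b}. u t \<noteq> 0" using upos[OF \<open>m \<in> {a<..<b}\<close>] \<open>m \<in> {a<..<b}\<close> by (intro bexI[of _ m]) auto
    qed
  qed
  show "\<exists>q1 q2 c d. piecewise_continuous_on a b q1 \<and> piecewise_continuous_on a b q2 \<and>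
              a < c \<and> d < b \<and> d - c = e \<and>
              (\<forall>t\<in>{a..b} - {c..d}. q1 t \<le> q2 t) \<and>
              (\<forall>t\<in>{c..d}. q1 t > q2 t) \<and>
              (\<exists>u. is_solution_on a b q1 u \<and> u a = 0 \<and> u b = 0 \<and>
                   (\<forall>t\<in>{a<..<b}. u t \<noteq> 0)) \<and>
              (\<exists>v. is_solution_on a b q2 v \<and> (\<forall>t\<in>{a..b}. v t \<noteq> 0))"
    by (intro exI[of _ q1] exI[of _ q2] exI[of _ c] exI[of _ d] conjI G1 G2 G3 G4 G5 G6 G7 G8)
qed

end
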